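(* Consider the following sequence of multiple testing problems indexed by the dimension $n$. Let $f(\cdot\mid\theta)$, $\theta\in\mathbb{R}$, be a parametric family of densities, let $\theta_0\neq\theta_1$, and let $m\ge1$ be an integer. There is an unknown support set $\mathcal{S}=\mathcal{S}(n)\subseteq\{1,\dots,n\}$ with $s=|\mathcal{S}|$. Run the following sequential thresholding procedure with $K$ passes. Set $\mathcal{S}_0=\{1,\dots,n\}$ and $\gamma_0=\mathrm{median}(T_{i,m}\mid\theta_0)$, the median of the distribution of $T_{i,m}=\sum_{j=1}^m\log\frac{f(y_{i,j}\mid\theta_1)}{f(y_{i,j}\mid\theta_0)}$ when the $y_{i,j}$ are i.i.d. $f(\cdot\mid\theta_0)$. For $k=1,\dots,K$: for each $i\in\mathcal{S}_{k-1}$ draw fresh observations $y^{(k)}_{i,1},\dots,y^{(k)}_{i,m}$, independent of everything else, i.i.d. $f(\cdot\mid\theta_0)$ if $i\notin\mathcal{S}$ and i.i.d. $f(\cdot\mid\theta_1)$ if $i\in\mathcal{S}$, compute $T^{(k)}_{i,m}=\sum_{j=1}^m\log\frac{f(y^{(k)}_{i,j}\mid\theta_1)}{f(y^{(k)}_{i,j}\mid\theta_0)}$, and set $\mathcal{S}_k=\{i\in\mathcal{S}_{k-1}: T^{(k)}_{i,m}>\gamma_0\}$. The output is $\mathcal{S}_K$. (For the purpose of the condition below, $T^{(k)}_{i,m}$ is regarded as defined for all $i\in\mathcal{S}$ and all $k\le K$.) Suppose that $$\lim_{n\to\infty}\mathbb{P}\Big(\min_{1\le k\le K}\ \min_{i\in\mathcal{S}}T^{(k)}_{i,m}\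 \le\ \mathrm{median}(T_{i,m}\mid\theta_0)\Big)=0$$ and $K=(1+\epsilon)\log_2 n$ for some $\epsilon>0$. Then sequential thresholding is reliable: with $\mathcal{E}_\epsilon=\{\mathcal{S}_K\neq\mathcal{S}\}$, $\lim_{n\to\infty}\mathbb{P}(\mathcal{E}_\epsilon)=0$.
   Context: A support estimator $\widehat{\mathcal{S}}(n)$ is called reliable if $\lim_{n\to\infty}\mathbb{P}(\widehat{\mathcal{S}}(n)\neq\mathcal{S}(n))=0$. The quantities $s$, $\theta_0,\theta_1$ may depend on $n$. *)

theory Defs
  imports "HOL-Probability.Probability"
begin

definition obs_dist :: "(real \<Rightarrow> real \<Rightarrow> real) \<Rightarrow> real \<Rightarrow> real measure" where
  "obs_dist f \<theta> = density lborel (\<lambda>y. ennreal (f \<theta> y))"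

definition llr_stat :: "(real \<Rightarrow> real \<Rightarrow> real) \<Rightarrow> real \<Rightarrow> real \<Rightarrow> nat \<Rightarrow> (nat \<Rightarrow> real) \<Rightarrow> real" where
  "llr_stat f \<theta>0 \<theta>1 m ys = (\<Sum>j<m. ln (f \<theta>1 (ys j) / f \<theta>0 (ys j)))"

definition is_median :: "'a measure \<Rightarrow> ('a \<Rightarrow> real) \<Rightarrow> real \<Rightarrow> bool" where
  "is_median M X \<gamma> \<longleftrightarrow>
     measure M {x \<in> space M. X x \<le> \<gamma>} \<ge> 1/2 \<and> measure M {x \<in> space M. X x \<ge> \<gamma>} \<ge> 1/2"

fun surv :: "nat \<Rightarrow> (nat \<Rightarrow> nat \<Rightarrow> real) \<Rightarrow> real \<Rightarrow> nat \<Rightarrow> nat set" where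
  "surv n T \<gamma> 0 = {1..n}"
| "surv n T \<gamma> (Suc k) = {i \<in> surv n T \<gamma> k. T (Suc k) i > \<gamma>}"

end

theory Submission imports Defs begin


lemma (in prob_space) indep_vars_reindex:
  assumes ind: "indep_vars M' X I" and inj: "inj_on h J" and sub: "h ` J \<subseteq> I"
  shows "indep_vars (\<lambda>j. M' (h j)) (\<lambda>j. X (h j)) J"
proof -
  let ?F = "\<lambda>i. sigma_sets (space M) { X i -` A \<inter> space M | A. A \<in> sets (M' i)}"
  have rv: "\<forall>i\<in>I. random_variable (M' i) (X i)" and hI: "indep_sets ?F I"
    using ind unfolding indep_vars_def by auto
  have "indep_sets (\<lambda>j. ?F (h j)) J"
    unfolding indep_sets_def
  proof (intro conjI ballI allI impI)
    fix j assume "j \<in> J"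
    then show "?F (h j) \<subseteq> events" using hI sub unfolding indep_sets_def by auto
  next
    fix J' A assume J': "J' \<subseteq> J" "J' \<noteq> {}" "finite J'" and A: "A \<in> Pi J' (\<lambda>j. ?F (h j))"
    define B where "B = (\<lambda>p. A (inv_into J' h p))"
    have inj': "inj_on h J'" using inj J' inj_on_subset by blast
    have Bi: "\<And>j. j \<in> J' \<Longrightarrow> B (h j) = A j" unfolding B_def using inj' by simp
    have "B \<in> Pi (h ` J') ?F" using A Bi by auto
    moreover have "h ` J' \<subseteq> I" "h ` J' \<noteq> {}" "finite (h ` J')" using J' sub by auto
    ultimately have "prob (\<Inter>p\<in>h ` J'. B p) = (\<Prod>p\<in>h ` J'. prob (B p))"
      using hI unfolding indep_sets_def by blast
    moreover have "(\<Inter>p\<in>h ` J'. B p) = (\<Inter>j\<in>J'. A j)" using Bi by auto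
    moreover have "(\<Prod>p\<in>h ` J'. prob (B p)) = (\<Prod>j\<in>J'. prob (A j))"
      proof -
      have "(\<Prod>p\<in>h ` J'. prob (B p)) = (\<Prod>j\<in>J'. prob (B (h j)))"
        using prod.reindex[OF inj'] by (simp add: comp_def)
      also have "\<dots> = (\<Prod>j\<in>J'. prob (A j))" using Bi by (intro prod.cong) auto
      finally show ?thesis .
    qed
    ultimately show "prob (\<Inter>j\<in>J'. A j) = (\<Prod>j\<in>J'. prob (A j))" by simp
  qed
  then show ?thesis unfolding indep_vars_def using rv sub by auto
qed


lemma null_bound:
  fixes X :: "nat \<times> nat \<times> nat \<Rightarrow> 'w \<Rightarrow> real" and g :: "(nat \<Rightarrow> real) \<Rightarrow> real"
    and P :: "real measure"
  assumes Mp: "prob_space M"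
   and ind: "prob_space.indep_vars M (\<lambda>_. borel) X I"
   and sub: "{1..K} \<times> {i} \<times> {..<m} \<subseteq> I"
   and m: "m \<ge> 1"
   and distX: "\<And>k j. k \<in> {1..K} \<Longrightarrow> j < m \<Longrightarrow> distr M borel (X (k,i,j)) = P"
   and Pp: "prob_space P" and Ps: "sets P = sets borel"
   and gm: "g \<in> borel_measurable (PiM {..<m} (\<lambda>_. borel))"
   and gc: "\<And>x y. (\<And>j. j < m \<Longrightarrow> x j = y j) \<Longrightarrow> g x = g y"
   and med: "measure (PiM {..<m} (\<lambda>_. P)) {x \<in> space (PiM {..<m} (\<lambda>_. P)). g x \<le> \<gamma>} \<ge> 1/2"
  shows "measure M {\<omega> \<in> space M. \<forall>k\<in>{1..K}. g (\<lambda>j. X (k,i,j) \<omega>) > \<gamma>} \<le> (1/2)^K"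
proof -
  interpret prob_space M by (rule Mp)
  have Xm: "\<And>p. p \<in> I \<Longrightarrow> random_variable borel (X p)"
    using ind unfolding indep_vars_def by auto
  have Xk: "\<And>k j. k \<in> {1..K} \<Longrightarrow> j < m \<Longrightarrow> random_variable borel (X (k,i,j))"
    by (intro Xm subsetD[OF sub]) auto
  let ?Q = "PiM {..<m} (\<lambda>_. P)"
  let ?B = "PiM {..<m} (\<lambda>_. borel :: real measure)"
  have ss: "sets ?Q = sets ?B" using Ps by (intro sets_PiM_cong) auto
  have sp: "space ?Q = space ?B" using sets_eq_imp_space_eq[OF ss] .
  have gmQ: "g \<in> borel_measurable ?Q" by (subst measurable_cong_sets[OF ss refl]) (rule gm)
  have Qp: "prob_space ?Q" using Pp by (intro prob_space_PiM) auto
  have T: "{\<omega> \<in> space M. g (\<lambda>j. X (k,i,j) \<omega>) > \<gamma>} \<in> events"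
    if "k \<in> {1..K}" for k
  proof -
    have r: "(\<lambda>\<omega>. \<lambda>j\<in>{..<m}. X (k,i,j) \<omega>) \<in> measurable M ?B"
      using Xk that by (intro measurable_restrict) auto
    have "(\<lambda>\<omega>. g (\<lambda>j\<in>{..<m}. X (k,i,j) \<omega>)) \<in> borel_measurable M"
      using measurable_comp[OF r gm] by (simp add: comp_def)
    moreover have "\<And>\<omega>. g (\<lambda>j\<in>{..<m}. X (k,i,j) \<omega>) = g (\<lambda>j. X (k,i,j) \<omega>)"
      by (rule gc) auto
    ultimately have "(\<lambda>\<omega>. g (\<lambda>j. X (k,i,j) \<omega>)) \<in> borel_measurable M" by simp
    then show ?thesis by measurable
  qed
  have marg: "prob {\<omega> \<in> space M. g (\<lambda>j. X (k,i,j) \<omega>) > \<gamma>} \<le> 1/2"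
    if k: "k \<in> {1..K}" for k
  proof -
    have "(\<lambda>j. (k, i, j)) ` {..<m} \<subseteq> I" using sub k by auto
    then have iv: "indep_vars (\<lambda>_. borel) (\<lambda>j. X (k,i,j)) {..<m}"
      using indep_vars_reindex[OF ind, of "\<lambda>j. (k,i,j)" "{..<m}"] by (auto simp: inj_on_def)
    have ne: "{..<m} \<noteq> {}" using m by (auto simp: lessThan_empty_iff)
    have r: "(\<lambda>\<omega>. \<lambda>j\<in>{..<m}. X (k,i,j) \<omega>) \<in> measurable M ?B"
      using Xk k by (intro measurable_restrict) auto
    have "distr M ?B (\<lambda>\<omega>. \<lambda>j\<in>{..<m}. X (k,i,j) \<omega>) = PiM {..<m} (\<lambda>j. distr M borel (X (k,i,j)))"
      using iv indep_vars_iff_distr_eq_PiM'[OF ne, where M'="\<lambda>_. borel" and X="\<lambda>j. X (k,i,j)"] Xk k by auto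
    also have "\<dots> = ?Q" using distX[OF k] by (intro PiM_cong) auto
    finally have D: "distr M ?B (\<lambda>\<omega>. \<lambda>j\<in>{..<m}. X (k,i,j) \<omega>) = ?Q" .
    define A where "A = {x \<in> space ?Q. g x > \<gamma>}"
    have A: "A \<in> sets ?Q" unfolding A_def using gmQ by measurable
    have "measure ?Q A = measure M ((\<lambda>\<omega>. \<lambda>j\<in>{..<m}. X (k,i,j) \<omega>) -` A \<inter> space M)"
      using measure_distr[OF r, of A] A ss D by simp
    also have "(\<lambda>\<omega>. \<lambda>j\<in>{..<m}. X (k,i,j) \<omega>) -` A \<inter> space M = {\<omega> \<in> space M. g (\<lambda>j. X (k,i,j) \<omega>) > \<gamma>}"
    proof -
      have "\<And>\<omega>. g (\<lambda>j\<in>{..<m}. X (k,i,j) \<omega>) = g (\<lambda>j. X (k,i,j) \<omega>)" by (rule gc) auto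
      moreover have "\<And>\<omega>. \<omega> \<in> space M \<Longrightarrow> (\<lambda>j\<in>{..<m}. X (k,i,j) \<omega>) \<in> space ?Q"
        using measurable_space[OF r] sp by auto
      ultimately show ?thesis unfolding A_def by auto
    qed
    finally have e1: "measure ?Q A = prob {\<omega> \<in> space M. g (\<lambda>j. X (k,i,j) \<omega>) > \<gamma>}" by simp
    have C: "{x \<in> space ?Q. g x \<le> \<gamma>} \<in> sets ?Q" using gmQ by measurable
    have "A = space ?Q - {x \<in> space ?Q. g x \<le> \<gamma>}" unfolding A_def by auto
    then have "measure ?Q A = 1 - measure ?Q {x \<in> space ?Q. g x \<le> \<gamma>}"
      using prob_space.prob_compl[OF Qp C] by simp
    with med e1 show ?thesis by simp
  qed
  show ?thesis
  proof (cases "K = 0")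
    case True
    then show ?thesis by (simp add: prob_le_1)
  next
    case False
    define Kb where "Kb = (\<lambda>k::nat. {k} \<times> {i} \<times> {..<m})"
    have ir: "indep_vars (\<lambda>k. PiM (Kb k) (\<lambda>_. borel)) (\<lambda>k \<omega>. restrict (\<lambda>p. X p \<omega>) (Kb k)) {1..K}"
      using sub by (intro indep_vars_restrict[OF ind]) (auto simp: Kb_def disjoint_family_on_def)
    define G where "G = (\<lambda>(k::nat) (x::nat \<times> nat \<times> nat \<Rightarrow> real). g (\<lambda>j\<in>{..<m}. x (k,i,j)))"
    have Gm: "G k \<in> borel_measurable (PiM (Kb k) (\<lambda>_. borel))" if "k \<in> {1..K}" for k
    proof -
      have "(\<lambda>x. \<lambda>j\<in>{..<m}. x (k,i,j)) \<in> measurable (PiM (Kb k) (\<lambda>_. borel)) ?B"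
        by (intro measurable_restrict measurable_component_singleton) (auto simp: Kb_def)
      from measurable_comp[OF this gm] show ?thesis by (simp add: G_def comp_def)
    qed
    have ic: "indep_vars (\<lambda>_. borel) (\<lambda>k \<omega>. G k (restrict (\<lambda>p. X p \<omega>) (Kb k))) {1..K}"
      by (rule indep_vars_compose2[OF ir Gm])
    have Geq: "G k (restrict (\<lambda>p. X p \<omega>) (Kb k)) = g (\<lambda>j. X (k,i,j) \<omega>)" for k \<omega>
      unfolding G_def by (rule gc) (auto simp: Kb_def)
    have ic2: "indep_vars (\<lambda>_. borel) (\<lambda>k \<omega>. g (\<lambda>j. X (k,i,j) \<omega>)) {1..K}"
      using ic by (simp add: Geq)
    have "prob (\<Inter>k\<in>{1..K}. (\<lambda>\<omega>. g (\<lambda>j. X (k,i,j) \<omega>)) -` {\<gamma><..} \<inter> space M)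
        = (\<Prod>k\<in>{1..K}. prob ((\<lambda>\<omega>. g (\<lambda>j. X (k,i,j) \<omega>)) -` {\<gamma><..} \<inter> space M))"
      using False by (intro indep_varsD[OF ic2]) auto
    moreover have "(\<Inter>k\<in>{1..K}. (\<lambda>\<omega>. g (\<lambda>j. X (k,i,j) \<omega>)) -` {\<gamma><..} \<inter> space M)
       = {\<omega> \<in> space M. \<forall>k\<in>{1..K}. g (\<lambda>j. X (k,i,j) \<omega>) > \<gamma>}" using False by auto
    moreover have "(\<Prod>k\<in>{1..K}. prob ((\<lambda>\<omega>. g (\<lambda>j. X (k,i,j) \<omega>)) -` {\<gamma><..} \<inter> space M))
        \<le> (\<Prod>k\<in>{1..K}. (1/2::real))"
    proof (rule prod_mono)
      fix k assume "k \<in> {1..K}"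
      moreover have "(\<lambda>\<omega>. g (\<lambda>j. X (k,i,j) \<omega>)) -` {\<gamma><..} \<inter> space M = {\<omega> \<in> space M. g (\<lambda>j. X (k,i,j) \<omega>) > \<gamma>}"
        by auto
      ultimately show "0 \<le> prob ((\<lambda>\<omega>. g (\<lambda>j. X (k,i,j) \<omega>)) -` {\<gamma><..} \<inter> space M) \<and>
          prob ((\<lambda>\<omega>. g (\<lambda>j. X (k,i,j) \<omega>)) -` {\<gamma><..} \<inter> space M) \<le> 1/2"
        using marg by auto
    qed
    ultimately show ?thesis by simp
  qed
qed


lemma surv_eq: "surv n T \<gamma> k = {i \<in> {1..n}. \<forall>k'\<in>{1..k}. T k' i > \<gamma>}"
proof (induction k)
  case 0 then show ?case by auto
next
  case (Suc k)
  show ?case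
  proof
    show "surv n T \<gamma> (Suc k) \<subseteq> {i \<in> {1..n}. \<forall>k'\<in>{1..Suc k}. T k' i > \<gamma>}"
      using Suc by (auto simp: le_Suc_eq)
    show "{i \<in> {1..n}. \<forall>k'\<in>{1..Suc k}. T k' i > \<gamma>} \<subseteq> surv n T \<gamma> (Suc k)"
      using Suc by auto
  qed
qed

lemma powr_bound:
  fixes \<epsilon> :: real and n :: nat
  assumes "\<epsilon> > 0" "n \<ge> 1" "K = nat \<lceil>(1 + \<epsilon>) * log 2 (real n)\<rceil>"
  shows "real n * (1/2)^K \<le> real n powr (-\<epsilon>)"
proof -
  have ln: "log 2 (real n) \<ge> 0" using assms by simp
  have Kge: "real K \<ge> (1 + \<epsilon>) * log 2 (real n)"
  proof -
    have c0: "\<lceil>(1 + \<epsilon>) * log 2 (real n)\<rceil> \<ge> 0" proof -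
      have "0 \<le> (1 + \<epsilon>) * log 2 (real n)" using ln assms(1) by (intro mult_nonneg_nonneg) auto
      then show ?thesis by simp
    qed
    have "real K = of_int \<lceil>(1 + \<epsilon>) * log 2 (real n)\<rceil>" using assms(3) c0 by simp
    then show ?thesis by simp
  qed
  have "(1/2::real)^K = 2 powr (- real K)"
  proof -
    have "2 powr (- real K) = inverse (2 powr real K)" by (rule powr_minus)
    also have "2 powr real K = (2::real) ^ K" by (rule powr_realpow) simp
    also have "inverse ((2::real) ^ K) = (1/2)^K" by (simp only: power_inverse inverse_eq_divide power_one_over)
    finally show ?thesis by simp
  qed
  also have "\<dots> \<le> 2 powr (- ((1 + \<epsilon>) * log 2 (real n)))"
    using Kge by (intro powr_mono) auto
  also have "\<dots> = real n powr (-(1 + \<epsilon>))"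
  proof -
    have "(2 powr (log 2 (real n))) powr (-(1+\<epsilon>)) = 2 powr (log 2 (real n) * -(1+\<epsilon>))"
      by (rule powr_powr)
    moreover have "log 2 (real n) * -(1+\<epsilon>) = - ((1 + \<epsilon>) * log 2 (real n))" by (simp add: algebra_simps)
    ultimately have "2 powr (- ((1 + \<epsilon>) * log 2 (real n))) = (2 powr (log 2 (real n))) powr (-(1+\<epsilon>))"
      by simp
    also have "\<dots> = real n powr (-(1+\<epsilon>))" using assms(2) by simp
    finally show ?thesis .
  qed
  finally have "real n * (1/2)^K \<le> real n * real n powr (-(1 + \<epsilon>))"
    using assms(2) by (intro mult_left_mono) auto
  also have "\<dots> = real n powr (-\<epsilon>)"
    using assms(2) by (simp add: powr_add[symmetric] powr_mult_base)
  finally show ?thesis .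
qed

theorem theorem2:
  fixes f :: "real \<Rightarrow> real \<Rightarrow> real"
    and \<theta>0 \<theta>1 :: "nat \<Rightarrow> real"
    and m :: nat
    and \<epsilon> :: real
    and K :: "nat \<Rightarrow> nat"
    and S :: "nat \<Rightarrow> nat set"
    and \<gamma>0 :: "nat \<Rightarrow> real"
    and M :: "nat \<Rightarrow> 'w measure"
    and Y :: "nat \<Rightarrow> nat \<Rightarrow> nat \<Rightarrow> nat \<Rightarrow> 'w \<Rightarrow> real"
  assumes f_meas: "\<And>\<theta>. f \<theta> \<in> borel_measurable borel"
    and f_nonneg: "\<And>\<theta> y. f \<theta> y \<ge> 0"
    and f_dens: "\<And>\<theta>. prob_space (obs_dist f \<theta>)"
    and theta_ne: "\<And>n. \<theta>0 n \<noteq> \<theta>1 n"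
    and m_pos: "m \<ge> 1"
    and S_sub: "\<And>n. S n \<subseteq> {1..n}"
    and median: "\<And>n. is_median (PiM {..<m} (\<lambda>_. obs_dist f (\<theta>0 n))) (llr_stat f (\<theta>0 n) (\<theta>1 n) m) (\<gamma>0 n)"
    and eps_pos: "\<epsilon> > 0"
    and K_def: "\<And>n. K n = nat \<lceil>(1 + \<epsilon>) * log 2 (real n)\<rceil>"
    and M_prob: "\<And>n. prob_space (M n)"
    and Y_meas: "\<And>n k i j. Y n k i j \<in> borel_measurable (M n)"
    and Y_indep: "\<And>n. prob_space.indep_vars (M n) (\<lambda>_. borel) (\<lambda>(k, i, j). Y n k i j)
                          ({1..K n} \<times> {1..n} \<times> {..<m})"
    and Y_null: "\<And>n k i j. k \<in> {1..K n} \<Longrightarrow> i \<in> {1..n} - S n \<Longrightarrow> j < m \<Longrightarrow>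
                   distr (M n) borel (Y n k i j) = obs_dist f (\<theta>0 n)"
    and Y_sig: "\<And>n k i j. k \<in> {1..K n} \<Longrightarrow> i \<in> S n \<Longrightarrow> j < m \<Longrightarrow>
                   distr (M n) borel (Y n k i j) = obs_dist f (\<theta>1 n)"
    and signal_cond:
      "(\<lambda>n. measure (M n) {\<omega> \<in> space (M n). \<exists>k\<in>{1..K n}. \<exists>i\<in>S n.
              llr_stat f (\<theta>0 n) (\<theta>1 n) m (\<lambda>j. Y n k i j \<omega>) \<le> \<gamma>0 n}) \<longlonglongrightarrow> 0"
  shows "(\<lambda>n. measure (M n) {\<omega> \<in> space (M n).
            surv n (\<lambda>k i. llr_stat f (\<theta>0 n) (\<theta>1 n) m (\<lambda>j. Y n k i j \<omega>)) (\<gamma>0 n) (K n) \<noteq> S n})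
         \<longlonglongrightarrow> 0"
proof -
  define T where "T = (\<lambda>n k i \<omega>. llr_stat f (\<theta>0 n) (\<theta>1 n) m (\<lambda>j. Y n k i j \<omega>))"
  define Sig where "Sig = (\<lambda>n. {\<omega> \<in> space (M n). \<exists>k\<in>{1..K n}. \<exists>i\<in>S n. T n k i \<omega> \<le> \<gamma>0 n})"
  define E where "E = (\<lambda>n. {\<omega> \<in> space (M n).
            surv n (\<lambda>k i. T n k i \<omega>) (\<gamma>0 n) (K n) \<noteq> S n})"
  define N where "N = (\<lambda>n i. {\<omega> \<in> space (M n). \<forall>k\<in>{1..K n}. T n k i \<omega> > \<gamma>0 n})"
  note [measurable] = f_meas Y_meas
  have Tm[measurable]: "T n k i \<in> borel_measurable (M n)" for n k i
    unfolding T_def llr_stat_def by measurable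
  have key: "measure (M n) (E n) \<le> measure (M n) (Sig n) + real n * (1/2)^(K n)" for n
  proof -
    interpret prob_space "M n" by (rule M_prob)
    have finS: "finite (S n)" using S_sub finite_subset by blast
    have Sigm: "Sig n \<in> events"
    proof -
      have "Sig n = (\<Union>k\<in>{1..K n}. \<Union>i\<in>S n. {\<omega> \<in> space (M n). T n k i \<omega> \<le> \<gamma>0 n})"
        unfolding Sig_def by auto
      also have "\<dots> \<in> events" using finS by (intro sets.finite_UN) auto
      finally show ?thesis .
    qed
    have Nm: "N n i \<in> events" for i
    proof (cases "K n = 0")
      case True then show ?thesis unfolding N_def by simp
    next
      case False
      have "N n i = (\<Inter>k\<in>{1..K n}. {\<omega> \<in> space (M n). T n k i \<omega> > \<gamma>0 n})"
      proof -
        have one: "1 \<in> {1..K n}" using False by simp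
        show ?thesis unfolding N_def using one by blast
      qed
      also have "\<dots> \<in> events" using False by (intro sets.finite_INT) auto
      finally show ?thesis .
    qed
    have sub: "E n \<subseteq> Sig n \<union> (\<Union>i\<in>{1..n} - S n. N n i)"
    proof
      fix \<omega> assume \<omega>: "\<omega> \<in> E n"
      show "\<omega> \<in> Sig n \<union> (\<Union>i\<in>{1..n} - S n. N n i)"
      proof (cases "\<omega> \<in> Sig n")
        case True then show ?thesis by simp
      next
        case False
        with \<omega> have sp: "\<omega> \<in> space (M n)" and all: "\<forall>k\<in>{1..K n}. \<forall>i\<in>S n. T n k i \<omega> > \<gamma>0 n"
          unfolding E_def Sig_def by (auto simp: not_le)
        let ?R = "surv n (\<lambda>k i. T n k i \<omega>) (\<gamma>0 n) (K n)"
        have R: "?R = {i \<in> {1..n}. \<forall>k'\<in>{1..K n}. T n k' i \<omega> > \<gamma>0 n}" by (rule surv_eq)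
        have "S n \<subseteq> ?R" using R all S_sub[of n] by auto
        moreover have "?R \<noteq> S n" using \<omega> unfolding E_def by auto
        ultimately obtain i where "i \<in> ?R" "i \<notin> S n" by blast
        then show ?thesis using R sp unfolding N_def by auto
      qed
    qed
    have nb: "measure (M n) (N n i) \<le> (1/2)^(K n)" if i: "i \<in> {1..n} - S n" for i
    proof -
      have Ps: "sets (obs_dist f (\<theta>0 n)) = sets borel" unfolding obs_dist_def by simp
      have gm: "llr_stat f (\<theta>0 n) (\<theta>1 n) m \<in> borel_measurable (PiM {..<m} (\<lambda>_. borel))"
        unfolding llr_stat_def by measurable
      have gc: "llr_stat f (\<theta>0 n) (\<theta>1 n) m x = llr_stat f (\<theta>0 n) (\<theta>1 n) m y"
        if "\<And>j. j < m \<Longrightarrow> x j = y j" for x y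
        unfolding llr_stat_def using that by (intro sum.cong) auto
      have med: "measure (PiM {..<m} (\<lambda>_. obs_dist f (\<theta>0 n)))
          {x \<in> space (PiM {..<m} (\<lambda>_. obs_dist f (\<theta>0 n))). llr_stat f (\<theta>0 n) (\<theta>1 n) m x \<le> \<gamma>0 n} \<ge> 1/2"
        using median[of n] unfolding is_median_def by simp
      have "measure (M n) {\<omega> \<in> space (M n). \<forall>k\<in>{1..K n}.
          llr_stat f (\<theta>0 n) (\<theta>1 n) m (\<lambda>j. (\<lambda>(k, i, j). Y n k i j) (k,i,j) \<omega>) > \<gamma>0 n} \<le> (1/2)^(K n)"
        by (rule null_bound[OF M_prob[of n] Y_indep[of n] _ m_pos _ f_dens Ps gm gc med])
           (use i Y_null in auto)
      then show ?thesis unfolding N_def T_def by simp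
    qed
    have "measure (M n) (E n) \<le> measure (M n) (Sig n \<union> (\<Union>i\<in>{1..n} - S n. N n i))"
      using Sigm Nm by (intro finite_measure_mono[OF sub]) auto
    also have "\<dots> \<le> measure (M n) (Sig n) + measure (M n) (\<Union>i\<in>{1..n} - S n. N n i)"
      using Sigm Nm by (intro measure_Un_le) auto
    also have "measure (M n) (\<Union>i\<in>{1..n} - S n. N n i) \<le> (\<Sum>i\<in>{1..n} - S n. measure (M n) (N n i))"
      using Nm by (intro finite_measure_subadditive_finite) auto
    also have "\<dots> \<le> (\<Sum>i\<in>{1..n} - S n. (1/2::real)^(K n))"
      using nb by (intro sum_mono) auto
    also have "\<dots> = real (card ({1..n} - S n)) * (1/2)^(K n)" by simp
    also have "\<dots> \<le> real n * (1/2)^(K n)"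
    proof -
      have "card ({1..n} - S n) \<le> card {1..n}" by (intro card_mono) auto
      then show ?thesis by (intro mult_right_mono) auto
    qed
    finally show ?thesis by simp
  qed
  have lim1: "(\<lambda>n. real n powr (-\<epsilon>)) \<longlonglongrightarrow> 0"
    using eps_pos by (intro tendsto_neg_powr filterlim_real_sequentially) auto
  have lim2: "(\<lambda>n. measure (M n) (Sig n) + real n powr (-\<epsilon>)) \<longlonglongrightarrow> 0"
    using tendsto_add_zero[OF signal_cond lim1] unfolding Sig_def T_def by simp
  have "(\<lambda>n. measure (M n) (E n)) \<longlonglongrightarrow> 0"
  proof (rule tendsto_sandwich[OF _ _ tendsto_const lim2])
    show "\<forall>\<^sub>F n in sequentially. 0 \<le> measure (M n) (E n)" by simp
    show "\<forall>\<^sub>F n in sequentially. measure (M n) (E n) \<le> measure (M n) (Sig n) + real n powr (-\<epsilon>)"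
      using eventually_ge_at_top[of 1]
    proof eventually_elim
      case (elim n)
      show ?case using key[of n] powr_bound[OF eps_pos elim K_def] by simp
    qed
  qed
  then show ?thesis unfolding E_def T_def .
qed

end
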